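(* Let $\mathcal T_1=(T_{1,t})_{t\ge0}$ and $\mathcal T_2=(T_{2,t})_{t\ge0}$ be strongly continuous semigroups of contractions on the same Hilbert space $\mathcal H$ with cogenerators $T_1$ and $T_2$ respectively. The following are equivalent: (1) $T_{1,t}T_{2,t}=T_{2,t}T_{1,t}$ for every $t\ge0$; (2) $T_1T_2=T_2T_1$; (3) $T_{1,t}T_{2,s}=T_{2,s}T_{1,t}$ for all $t,s\ge0$.
   Context: If $A$ is the generator of a contractive $C_0$-semigroup, its cogenerator is the bounded operator $(A+I)(A-I)^{-1}$. *)

theory Defs
  imports "HOL-Analysis.Analysis"
begin

definition contraction_C0_semigroup ::
  "(real \<Rightarrow> ('a::{real_inner,complete_space} \<Rightarrow>\<^sub>L 'a)) \<Rightarrow> bool" where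
  "contraction_C0_semigroup T \<longleftrightarrow>
     T 0 = id_blinfun \<and>
     (\<forall>s\<ge>0. \<forall>t\<ge>0. T (s + t) = T s o\<^sub>L T t) \<and>
     (\<forall>t\<ge>0. norm (T t) \<le> 1) \<and>
     (\<forall>x. ((\<lambda>t. blinfun_apply (T t) x) \<longlongrightarrow> x) (at_right 0))"

definition generator_dom ::
  "(real \<Rightarrow> ('a::{real_inner,complete_space} \<Rightarrow>\<^sub>L 'a)) \<Rightarrow> 'a set" where
  "generator_dom T = {x. \<exists>y. ((\<lambda>h. (1 / h) *\<^sub>R (blinfun_apply (T h) x - x)) \<longlongrightarrow> y) (at_right 0)}"

definition generator ::
  "(real \<Rightarrow> ('a::{real_inner,complete_space} \<Rightarrow>\<^sub>L 'a)) \<Rightarrow> 'a \<Rightarrow> 'a" where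
  "generator T x = Lim (at_right 0) (\<lambda>h. (1 / h) *\<^sub>R (blinfun_apply (T h) x - x))"

text \<open>Cogenerator: the bounded operator V = (A + I)(A - I)^{-1}, i.e. the bounded operator with
  V ((A - I) x) = (A + I) x for all x in the domain of A.\<close>
definition cogenerator ::
  "(real \<Rightarrow> ('a::{real_inner,complete_space} \<Rightarrow>\<^sub>L 'a)) \<Rightarrow> ('a \<Rightarrow>\<^sub>L 'a)" where
  "cogenerator T = (THE V. \<forall>x\<in>generator_dom T.
      blinfun_apply V (generator T x - x) = generator T x + x)"

end

theory Submission
  imports Defs
begin

lemma blinfun_compose_assoc: "(a o\<^sub>L b) o\<^sub>L c = a o\<^sub>L (b o\<^sub>L c)"
  by (rule blinfun_eqI) simp
lemma blinfun_compose_minus_left: "(a - b) o\<^sub>L c = (a o\<^sub>L c) - (b o\<^sub>L c)"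
  by (rule blinfun_eqI) (simp add: blinfun.diff_left)
lemma blinfun_compose_minus_right: "c o\<^sub>L (a - b) = (c o\<^sub>L a) - (c o\<^sub>L b)"
  by (rule blinfun_eqI) (simp add: blinfun.diff_left blinfun.diff_right)
lemma blinfun_compose_id_left[simp]: "id_blinfun o\<^sub>L a = a"
  by (rule blinfun_eqI) simp
lemma blinfun_compose_id_right[simp]: "a o\<^sub>L id_blinfun = a"
  by (rule blinfun_eqI) simp

lemma comm_app: assumes "P o\<^sub>L Q = Q o\<^sub>L P" shows "P (Q x) = Q (P x)"
proof -
  have "(P o\<^sub>L Q) x = (Q o\<^sub>L P) x" using assms by simp
  then show ?thesis by simp
qed

fun bpow :: "('a::real_normed_vector \<Rightarrow>\<^sub>L 'a) \<Rightarrow> nat \<Rightarrow> ('a \<Rightarrow>\<^sub>L 'a)" where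
  "bpow K 0 = id_blinfun"
| "bpow K (Suc n) = K o\<^sub>L bpow K n"

lemma bpow_norm: "norm (bpow K n) \<le> norm K ^ n"
proof (induction n)
  case 0 then show ?case by (simp add: norm_blinfun_id_le)
next
  case (Suc n)
  have "norm (K o\<^sub>L bpow K n) \<le> norm K * norm (bpow K n)" by (rule norm_blinfun_compose)
  also have "\<dots> \<le> norm K * norm K ^ n" using Suc by (simp add: mult_left_mono)
  finally show ?case by simp
qed

lemma bpow_comm: "L o\<^sub>L K = K o\<^sub>L L \<Longrightarrow> L o\<^sub>L bpow K n = bpow K n o\<^sub>L L"
proof (induction n)
  case 0 then show ?case by (auto intro: blinfun_eqI)
next
  case (Suc n)
  have "L o\<^sub>L (K o\<^sub>L bpow K n) = (L o\<^sub>L K) o\<^sub>L bpow K n" by (simp add: blinfun_compose_assoc)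
  also have "\<dots> = K o\<^sub>L (L o\<^sub>L bpow K n)" using Suc by (simp add: blinfun_compose_assoc)
  also have "\<dots> = (K o\<^sub>L bpow K n) o\<^sub>L L" using Suc by (simp add: blinfun_compose_assoc)
  finally show ?case by simp
qed

lemma bpow_Suc': "bpow K n o\<^sub>L K = bpow K (Suc n)"
  using bpow_comm[of K K n] by simp

lemma neumann:
  fixes K :: "'a::banach \<Rightarrow>\<^sub>L 'a"
  assumes nK: "norm K < 1"
  shows "\<exists>N. N o\<^sub>L (id_blinfun - K) = id_blinfun \<and> (id_blinfun - K) o\<^sub>L N = id_blinfun
     \<and> norm N \<le> 1 / (1 - norm K) \<and> (\<forall>L. L o\<^sub>L K = K o\<^sub>L L \<longrightarrow> L o\<^sub>L N = N o\<^sub>L L)"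
proof -
  have g: "summable (\<lambda>n. norm K ^ n)" using nK by (intro summable_geometric) simp
  have sn: "summable (\<lambda>n. norm (bpow K n))"
    by (rule summable_comparison_test[OF _ g]) (auto intro: bpow_norm)
  have s: "summable (bpow K)" using sn by (rule summable_norm_cancel)
  define N where "N = suminf (bpow K)"
  have sN: "bpow K sums N" using s N_def by (simp add: summable_sums)
  have z: "bpow K \<longlonglongrightarrow> 0"
  proof -
    have "(\<lambda>n. norm K ^ n) \<longlonglongrightarrow> 0" using nK by (intro LIMSEQ_power_zero) simp
    moreover have "eventually (\<lambda>n. norm (bpow K n) \<le> norm K ^ n) sequentially"
      by (rule always_eventually) (simp add: bpow_norm)
    ultimately show ?thesis using Lim_null_comparison by blast
  qed
  have tel: "(\<lambda>n. bpow K n - bpow K (Suc n)) sums id_blinfun"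
  proof -
    have "(\<lambda>n. (- bpow K (Suc n)) - (- bpow K n)) sums (0 - (- bpow K 0))"
      by (rule telescope_sums) (use tendsto_minus[OF z] in simp)
    then show ?thesis by simp
  qed
  have bl1: "bounded_linear (\<lambda>X. X o\<^sub>L (id_blinfun - K))"
    by (rule bounded_bilinear.bounded_linear_left[OF bounded_bilinear_blinfun_compose])
  have bl2: "bounded_linear (\<lambda>X. (id_blinfun - K) o\<^sub>L X)"
    by (rule bounded_bilinear.bounded_linear_right[OF bounded_bilinear_blinfun_compose])
  have e1: "bpow K n o\<^sub>L (id_blinfun - K) = bpow K n - bpow K (Suc n)" for n
    by (simp add: blinfun_compose_minus_right bpow_Suc' del: bpow.simps(2))
  have e2: "(id_blinfun - K) o\<^sub>L bpow K n = bpow K n - bpow K (Suc n)" for n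
    by (simp add: blinfun_compose_minus_left)
  have 1: "N o\<^sub>L (id_blinfun - K) = id_blinfun"
    using bounded_linear.sums[OF bl1 sN] tel by (simp add: e1 sums_unique2)
  have 2: "(id_blinfun - K) o\<^sub>L N = id_blinfun"
    using bounded_linear.sums[OF bl2 sN] tel by (simp add: e2 sums_unique2)
  have "norm N \<le> (\<Sum>n. norm (bpow K n))" unfolding N_def by (rule summable_norm[OF sn])
  also have "\<dots> \<le> (\<Sum>n. norm K ^ n)" by (rule suminf_le[OF _ sn g]) (rule bpow_norm)
  also have "\<dots> = 1 / (1 - norm K)" using nK by (simp add: suminf_geometric)
  finally have 3: "norm N \<le> 1 / (1 - norm K)" .
  have 4: "L o\<^sub>L N = N o\<^sub>L L" if "L o\<^sub>L K = K o\<^sub>L L" for L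
  proof -
    have "L o\<^sub>L N = N o\<^sub>L (id_blinfun - K) o\<^sub>L L o\<^sub>L N" using 1 by simp
    also have "\<dots> = N o\<^sub>L (L o\<^sub>L (id_blinfun - K)) o\<^sub>L N"
      using that by (simp add: blinfun_compose_assoc blinfun_compose_minus_left blinfun_compose_minus_right)
    also have "\<dots> = N o\<^sub>L L" using 2 by (simp add: blinfun_compose_assoc)
    finally show ?thesis .
  qed
  show ?thesis using 1 2 3 4 by blast
qed


typedef (overloaded) ('a::"{real_normed_vector,complete_space}") bw = "UNIV :: 'a set"
  morphisms Rbw Abw by simp

setup_lifting type_definition_bw

instantiation bw :: ("{real_normed_vector,complete_space}") real_normed_vector
begin
lift_definition norm_bw :: "'a bw \<Rightarrow> real" is norm .
lift_definition minus_bw :: "'a bw \<Rightarrow> 'a bw \<Rightarrow> 'a bw" is "(-)" .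
lift_definition plus_bw :: "'a bw \<Rightarrow> 'a bw \<Rightarrow> 'a bw" is "(+)" .
lift_definition uminus_bw :: "'a bw \<Rightarrow> 'a bw" is uminus .
lift_definition zero_bw :: "'a bw" is 0 .
lift_definition scaleR_bw :: "real \<Rightarrow> 'a bw \<Rightarrow> 'a bw" is scaleR .
definition dist_bw :: "'a bw \<Rightarrow> 'a bw \<Rightarrow> real" where "dist_bw a b = norm (a - b)"
definition uniformity_bw :: "('a bw \<times> 'a bw) filter" where
  "uniformity_bw = (INF e\<in>{0 <..}. principal {(x, y). dist x y < e})"
definition open_bw :: "'a bw set \<Rightarrow> bool" where
  "open_bw S = (\<forall>x\<in>S. \<forall>\<^sub>F (x', y) in uniformity. x' = x \<longrightarrow> y \<in> S)"
definition sgn_bw :: "'a bw \<Rightarrow> 'a bw" where "sgn_bw x = scaleR (inverse (norm x)) x"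
instance
  apply standard
  unfolding dist_bw_def open_bw_def sgn_bw_def uniformity_bw_def
  apply (rule refl | (transfer, force simp: algebra_simps norm_triangle_ineq))+
  done
end

lemma Rbw_norm[simp]: "norm (Rbw x) = norm x" by transfer simp
lemma Rbw_diff: "Rbw (x - y) = Rbw x - Rbw y" by transfer simp
lemma Abw_norm: "norm (Abw x) = norm x" by transfer simp
lemma Rbw_linear: "bounded_linear Rbw"
  by (rule bounded_linear_intro[where K=1]) (transfer, simp)+
lemma Abw_linear: "bounded_linear Abw"
  by (rule bounded_linear_intro[where K=1]) (transfer, simp)+

instance bw :: ("{real_normed_vector,complete_space}") banach
proof
  fix X :: "nat \<Rightarrow> 'a bw" assume "Cauchy X"
  then have "Cauchy (\<lambda>n. Rbw (X n))"
    unfolding Cauchy_def dist_norm by (simp add: Rbw_diff[symmetric])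
  then obtain l where l: "(\<lambda>n. Rbw (X n)) \<longlonglongrightarrow> l" using Cauchy_convergent_iff convergent_def by blast
  have "(\<lambda>n. Abw (Rbw (X n))) \<longlonglongrightarrow> Abw l"
    using bounded_linear.tendsto[OF Abw_linear l] .
  then show "convergent X" by (simp add: Rbw_inverse convergent_def) blast
qed

lemma Abw_add: "Abw (a + b) = Abw a + Abw b" by transfer simp
lemma Abw_diff: "Abw (a - b) = Abw a - Abw b" by transfer simp
lemma Abw_scaleR: "Abw (c *\<^sub>R a) = c *\<^sub>R Abw a" by transfer simp
lemma Rbw_add: "Rbw (a + b) = Rbw a + Rbw b" by transfer simp
lemma Rbw_scaleR: "Rbw (c *\<^sub>R a) = c *\<^sub>R Rbw a" by transfer simp
lemma Abw_0[simp]: "Abw 0 = 0" by transfer simp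
lemma Rbw_0[simp]: "Rbw 0 = 0" by transfer simp
lemmas bw_simps = Abw_add Abw_diff Abw_scaleR Rbw_add Rbw_diff Rbw_scaleR Abw_inverse[OF UNIV_I] Rbw_inverse


definition cj :: "('a::{real_normed_vector,complete_space} \<Rightarrow>\<^sub>L 'a) \<Rightarrow> ('a bw \<Rightarrow>\<^sub>L 'a bw)" where
  "cj M = Blinfun (\<lambda>z. Abw (M (Rbw z)))"
definition ucj :: "('a::{real_normed_vector,complete_space} bw \<Rightarrow>\<^sub>L 'a bw) \<Rightarrow> ('a \<Rightarrow>\<^sub>L 'a)" where
  "ucj M = Blinfun (\<lambda>y. Rbw (M (Abw y)))"

lemma cj_apply: "cj M z = Abw (M (Rbw z))"
proof -
  have "bounded_linear (\<lambda>z. Abw (M (Rbw z)))"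
    by (rule bounded_linear_compose[OF Abw_linear bounded_linear_compose[OF blinfun.bounded_linear_right Rbw_linear]])
  then show ?thesis by (simp add: cj_def bounded_linear_Blinfun_apply)
qed

lemma ucj_apply: "ucj M y = Rbw (M (Abw y))"
proof -
  have "bounded_linear (\<lambda>y. Rbw (M (Abw y)))"
    by (rule bounded_linear_compose[OF Rbw_linear bounded_linear_compose[OF blinfun.bounded_linear_right Abw_linear]])
  then show ?thesis by (simp add: ucj_def bounded_linear_Blinfun_apply)
qed

lemma norm_cj: "norm (cj M) \<le> norm M"
proof (rule norm_blinfun_bound)
  fix z show "norm (cj M z) \<le> norm M * norm z"
    using norm_blinfun[of M "Rbw z"] by (simp add: cj_apply Abw_norm)
qed simp

lemma norm_ucj: "norm (ucj M) \<le> norm M"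
proof (rule norm_blinfun_bound)
  fix y show "norm (ucj M y) \<le> norm M * norm y"
    using norm_blinfun[of M "Abw y"] by (simp add: ucj_apply Abw_norm)
qed simp

lemma neumann_gen:
  fixes K :: "'a::{real_normed_vector,complete_space} \<Rightarrow>\<^sub>L 'a"
  assumes nK: "norm K < 1"
  shows "\<exists>N. N o\<^sub>L (id_blinfun - K) = id_blinfun \<and> (id_blinfun - K) o\<^sub>L N = id_blinfun
     \<and> norm N \<le> 1 / (1 - norm K) \<and> (\<forall>L. L o\<^sub>L K = K o\<^sub>L L \<longrightarrow> L o\<^sub>L N = N o\<^sub>L L)"
proof -
  have n': "norm (cj K) < 1" using norm_cj[of K] nK by linarith
  obtain N' where N': "N' o\<^sub>L (id_blinfun - cj K) = id_blinfun" "(id_blinfun - cj K) o\<^sub>L N' = id_blinfun"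
     "norm N' \<le> 1 / (1 - norm (cj K))" "\<And>L. L o\<^sub>L cj K = cj K o\<^sub>L L \<Longrightarrow> L o\<^sub>L N' = N' o\<^sub>L L"
    using neumann[OF n'] by blast
  have a1: "N' (z - cj K z) = z" for z
    using arg_cong[OF N'(1), of "\<lambda>M. blinfun_apply M z"] by (simp add: blinfun.diff_left)
  have a2: "N' z - cj K (N' z) = z" for z
    using arg_cong[OF N'(2), of "\<lambda>M. blinfun_apply M z"] by (simp add: blinfun.diff_left)
  define N where "N = ucj N'"
  have 1: "N o\<^sub>L (id_blinfun - K) = id_blinfun"
  proof (rule blinfun_eqI)
    fix y
    have "N' (Abw y - cj K (Abw y)) = Abw y" by (rule a1)
    then show "(N o\<^sub>L (id_blinfun - K)) y = id_blinfun y"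
      by (simp add: N_def ucj_apply cj_apply blinfun.diff_left bw_simps)
  qed
  have 2: "(id_blinfun - K) o\<^sub>L N = id_blinfun"
  proof (rule blinfun_eqI)
    fix y
    have "Rbw (N' (Abw y) - cj K (N' (Abw y))) = y" by (simp add: a2 bw_simps)
    then show "((id_blinfun - K) o\<^sub>L N) y = id_blinfun y"
      by (simp add: N_def ucj_apply cj_apply blinfun.diff_left bw_simps)
  qed
  have "norm N \<le> norm N'" unfolding N_def by (rule norm_ucj)
  also have "\<dots> \<le> 1 / (1 - norm (cj K))" by (rule N'(3))
  also have "\<dots> \<le> 1 / (1 - norm K)"
    using norm_cj[of K] nK n' by (intro divide_left_mono mult_pos_pos) auto
  finally have 3: "norm N \<le> 1 / (1 - norm K)" .
  have 4: "L o\<^sub>L N = N o\<^sub>L L" if L: "L o\<^sub>L K = K o\<^sub>L L" for L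
  proof -
    have "cj L o\<^sub>L cj K = cj K o\<^sub>L cj L"
    proof (rule blinfun_eqI)
      fix z show "(cj L o\<^sub>L cj K) z = (cj K o\<^sub>L cj L) z"
        using L by (simp add: cj_apply bw_simps) (metis blinfun_apply_blinfun_compose)
    qed
    then have c: "cj L o\<^sub>L N' = N' o\<^sub>L cj L" by (rule N'(4))
    show ?thesis
    proof (rule blinfun_eqI)
      fix y
      have "cj L (N' (Abw y)) = N' (cj L (Abw y))" using c by (metis blinfun_apply_blinfun_compose)
      then have "Rbw (cj L (N' (Abw y))) = Rbw (N' (cj L (Abw y)))" by simp
      then show "(L o\<^sub>L N) y = (N o\<^sub>L L) y" by (simp add: N_def ucj_apply cj_apply bw_simps)
    qed
  qed
  show ?thesis using 1 2 3 4 by blast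
qed


locale csg =
  fixes S :: "real \<Rightarrow> ('a::{real_inner,complete_space} \<Rightarrow>\<^sub>L 'a)"
  assumes csg: "contraction_C0_semigroup S"
begin

lemma S0[simp]: "S 0 = id_blinfun" using csg by (simp add: contraction_C0_semigroup_def)
lemma Sadd: "s \<ge> 0 \<Longrightarrow> t \<ge> 0 \<Longrightarrow> S (s + t) = S s o\<^sub>L S t"
  using csg by (simp add: contraction_C0_semigroup_def)
lemma Sadd_app: "s \<ge> 0 \<Longrightarrow> t \<ge> 0 \<Longrightarrow> S s (S t x) = S (s + t) x"
  by (simp add: Sadd)
lemma Snorm: "t \<ge> 0 \<Longrightarrow> norm (S t) \<le> 1"
  using csg by (simp add: contraction_C0_semigroup_def)
lemma Snorm_app: "t \<ge> 0 \<Longrightarrow> norm (S t x) \<le> norm x"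
  using norm_blinfun[of "S t" x] Snorm[of t] mult_right_mono[of "norm (S t)" 1 "norm x"]
  by simp
lemma Sright: "((\<lambda>t. S t x) \<longlongrightarrow> x) (at_right 0)"
  using csg by (simp add: contraction_C0_semigroup_def)
lemma Scomm: "s \<ge> 0 \<Longrightarrow> t \<ge> 0 \<Longrightarrow> S s o\<^sub>L S t = S t o\<^sub>L S s"
  using Sadd[of s t] Sadd[of t s] by (simp add: add.commute)
lemma Scomm_app: "s \<ge> 0 \<Longrightarrow> t \<ge> 0 \<Longrightarrow> S s (S t x) = S t (S s x)"
  by (simp add: Sadd_app add.commute)

lemma Ssmall: "e > 0 \<Longrightarrow> \<exists>d>0. \<forall>h. 0 < h \<and> h < d \<longrightarrow> norm (S h x - x) < e"
proof -
  assume e: "e > 0"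
  have "eventually (\<lambda>h. dist (S h x) x < e) (at_right 0)"
    using Sright[of x] e by (rule tendstoD)
  then obtain b where "b > 0" "\<And>h. h > 0 \<Longrightarrow> h < b \<Longrightarrow> dist (S h x) x < e"
    using eventually_at_right[of "0::real" 1] by auto
  then show ?thesis by (auto simp: dist_norm)
qed

lemma Scont: "continuous_on {0..} (\<lambda>t. S t x)"
  unfolding continuous_on_iff
proof (intro ballI allI impI)
  fix t0 e :: real assume t0: "t0 \<in> {0..}" and e: "e > 0"
  obtain d where d: "d > 0" "\<And>h. 0 < h \<and> h < d \<Longrightarrow> norm (S h x - x) < e"
    using Ssmall[OF e] by blast
  show "\<exists>d>0. \<forall>t\<in>{0..}. dist t t0 < d \<longrightarrow> dist (S t x) (S t0 x) < e"
  proof (intro exI[of _ d] conjI ballI impI)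
    fix t assume t: "t \<in> {0..}" and dt: "dist t t0 < d"
    consider "t = t0" | "t > t0" | "t < t0" by linarith
    then show "dist (S t x) (S t0 x) < e"
    proof cases
      case 1 then show ?thesis using e by simp
    next
      case 2
      have "S t x - S t0 x = S t0 (S (t - t0) x - x)"
        using t0 2 by (simp add: blinfun.diff_right Sadd_app)
      then have "norm (S t x - S t0 x) \<le> norm (S (t - t0) x - x)"
        using t0 Snorm_app by simp
      also have "\<dots> < e" using d 2 dt by (simp add: dist_real_def)
      finally show ?thesis by (simp add: dist_norm)
    next
      case 3
      have "S t0 x - S t x = S t (S (t0 - t) x - x)"
        using t 3 by (simp add: blinfun.diff_right Sadd_app)
      then have "norm (S t0 x - S t x) \<le> norm (S (t0 - t) x - x)"
        using t Snorm_app by simp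
      also have "\<dots> < e" using d 3 dt by (simp add: dist_real_def)
      finally show ?thesis by (simp add: dist_norm norm_minus_commute)
    qed
  qed (use d in auto)
qed

lemma Stendsto: "t \<ge> 0 \<Longrightarrow> ((\<lambda>s. S s x) \<longlongrightarrow> S t x) (at t within {0..})"
  using Scont[of x] by (simp add: continuous_on_def)

abbreviation "D \<equiv> generator_dom S"
abbreviation "A \<equiv> generator S"
abbreviation "q h x \<equiv> (1 / h) *\<^sub>R (S h x - x)"

lemma gen_lim:
  assumes "((\<lambda>h. q h x) \<longlongrightarrow> y) (at_right 0)"
  shows "x \<in> D" "A x = y"
proof -
  show "x \<in> D" using assms unfolding generator_dom_def by blast
  show "A x = y" unfolding generator_def using assms
    by (intro tendsto_Lim) (simp_all add: trivial_limit_at_right_real)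
qed

lemma gen_tendsto:
  assumes "x \<in> D" shows "((\<lambda>h. q h x) \<longlongrightarrow> A x) (at_right 0)"
proof -
  obtain y where y: "((\<lambda>h. q h x) \<longlongrightarrow> y) (at_right 0)"
    using assms unfolding generator_dom_def by blast
  then show ?thesis using gen_lim(2)[OF y] by simp
qed

lemma gen_comm:
  assumes L: "\<And>h. h \<ge> 0 \<Longrightarrow> L o\<^sub>L S h = S h o\<^sub>L L" and x: "x \<in> D"
  shows "L x \<in> D" "A (L x) = L (A x)"
proof -
  have eq: "q h (L x) = L (q h x)" if "h \<ge> 0" for h
  proof -
    have "S h (L x) = L (S h x)" using L[OF that] by (metis blinfun_apply_blinfun_compose)
    then show ?thesis by (simp add: blinfun.diff_right blinfun.scaleR_right)
  qed
  have t: "((\<lambda>h. L (q h x)) \<longlongrightarrow> L (A x)) (at_right 0)"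
    using gen_tendsto[OF x] by (intro blinfun.tendsto) auto
  have "((\<lambda>h. q h (L x)) \<longlongrightarrow> L (A x)) (at_right 0)"
  proof (rule Lim_transform_eventually[OF t])
    show "\<forall>\<^sub>F h in at_right 0. L (q h x) = q h (L x)"
      by (rule eventually_at_rightI[of 0 1]) (auto simp: eq)
  qed
  then show "L x \<in> D" "A (L x) = L (A x)" using gen_lim by auto
qed

lemma gen_inv: "x \<in> D \<Longrightarrow> t \<ge> 0 \<Longrightarrow> S t x \<in> D \<and> A (S t x) = S t (A x)"
  using gen_comm[of "S t" x] Scomm[of t] by auto

lemma Scomp:
  assumes "(f \<longlongrightarrow> c) F" "c \<ge> 0" "eventually (\<lambda>h. f h \<ge> 0) F"
  shows "((\<lambda>h. S (f h) v) \<longlongrightarrow> S c v) F"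
  using continuous_on_tendsto_compose[OF Scont[of v] assms(1)] assms(2,3) by auto

lemma apply_tendsto:
  assumes c: "(f \<longlongrightarrow> c) F" "c \<ge> 0" and ev: "eventually (\<lambda>h. f h \<ge> 0) F"
    and u: "(u \<longlongrightarrow> u0) F"
  shows "((\<lambda>h. S (f h) (u h)) \<longlongrightarrow> S c u0) F"
proof -
  have n: "((\<lambda>h. norm (u h - u0)) \<longlongrightarrow> 0) F"
    using u by (intro tendsto_norm_zero) (simp add: LIM_zero)
  have 1: "((\<lambda>h. S (f h) (u h - u0)) \<longlongrightarrow> 0) F"
    by (rule Lim_null_comparison[OF _ n]) (use ev in \<open>auto elim!: eventually_mono intro: Snorm_app\<close>)
  have "((\<lambda>h. S (f h) (u h - u0) + S (f h) u0) \<longlongrightarrow> 0 + S c u0) F"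
    by (intro tendsto_add 1 Scomp c ev)
  then show ?thesis by (simp add: blinfun.diff_right)
qed

lemma Sderiv:
  assumes x: "x \<in> D" and p: "p > 0"
  shows "((\<lambda>h. (1 / h) *\<^sub>R (S (p + h) x - S p x)) \<longlongrightarrow> S p (A x)) (at 0)"
proof (rule filterlim_split_at)
  have "((\<lambda>h. S p (q h x)) \<longlongrightarrow> S p (A x)) (at_right 0)"
    using gen_tendsto[OF x] by (intro blinfun.tendsto) auto
  then show "((\<lambda>h. (1 / h) *\<^sub>R (S (p + h) x - S p x)) \<longlongrightarrow> S p (A x)) (at_right 0)"
  proof (rule Lim_transform_eventually)
    show "\<forall>\<^sub>F h in at_right 0. S p (q h x) = (1 / h) *\<^sub>R (S (p + h) x - S p x)"
      by (rule eventually_at_rightI[of 0 1]) (use p in \<open>auto simp: blinfun.diff_right blinfun.scaleR_right Sadd_app\<close>)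
  qed
next
  have "((\<lambda>h. S (p - h) (q h x)) \<longlongrightarrow> S p (A x)) (at_right 0)"
  proof (rule apply_tendsto[OF _ _ _ gen_tendsto[OF x]])
    show "((\<lambda>h. p - h) \<longlongrightarrow> p) (at_right 0)"
      by (intro tendsto_eq_intros) auto
    show "\<forall>\<^sub>F h in at_right 0. 0 \<le> p - h"
      by (rule eventually_at_rightI[of 0 p]) (use p in auto)
  qed (use p in auto)
  then have "((\<lambda>h. (1 / (- h)) *\<^sub>R (S (p + - h) x - S p x)) \<longlongrightarrow> S p (A x)) (at_right 0)"
  proof (rule Lim_transform_eventually)
    show "\<forall>\<^sub>F h in at_right 0. S (p - h) (q h x) = (1 / (- h)) *\<^sub>R (S (p + - h) x - S p x)"
    proof (rule eventually_at_rightI[of 0 p])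
      fix h assume h: "h \<in> {0<..<p}"
      have "S p x = S (p - h) (S h x)" using h by (simp add: Sadd_app)
      then show "S (p - h) (q h x) = (1 / (- h)) *\<^sub>R (S (p + - h) x - S p x)"
        by (simp add: blinfun.diff_right blinfun.scaleR_right algebra_simps)
    qed (use p in auto)
  qed
  then show "((\<lambda>h. (1 / h) *\<^sub>R (S (p + h) x - S p x)) \<longlongrightarrow> S p (A x)) (at_left 0)"
    by (subst filterlim_at_left_to_right) simp
qed

end



lemma vd_quot:
  fixes F :: "real \<Rightarrow> 'b::real_normed_vector"
  shows "(F has_vector_derivative d) (at a within s) \<longleftrightarrow>
    ((\<lambda>y. (1 / (y - a)) *\<^sub>R (F y - F a)) \<longlongrightarrow> d) (at a within s)"
proof -
  have eq: "norm ((1 / (y - a)) *\<^sub>R (F y - F a) - d) =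
        norm (((F y - F a) - (y - a) *\<^sub>R d) /\<^sub>R norm (y - a))" if "y \<noteq> a" for y
  proof -
    have "(1 / (y - a)) *\<^sub>R ((F y - F a) - (y - a) *\<^sub>R d) = (1 / (y - a)) *\<^sub>R (F y - F a) - ((1 / (y - a)) * (y - a)) *\<^sub>R d"
      by (simp only: scaleR_diff_right scaleR_scaleR)
    also have "(1 / (y - a)) * (y - a) = 1" using that by simp
    finally have "(1 / (y - a)) *\<^sub>R (F y - F a) - d = (1 / (y - a)) *\<^sub>R ((F y - F a) - (y - a) *\<^sub>R d)"
      by simp
    then show ?thesis by (simp add: divide_inverse abs_inverse)
  qed
  have ev: "eventually (\<lambda>y. norm (((F y - F a) - (y - a) *\<^sub>R d) /\<^sub>R norm (y - a)) =
        norm ((1 / (y - a)) *\<^sub>R (F y - F a) - d)) (at a within s)"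
    unfolding eventually_at_filter by (rule always_eventually) (auto simp: eq)
  have "(F has_vector_derivative d) (at a within s) \<longleftrightarrow>
      ((\<lambda>y. norm (((F y - F a) - (y - a) *\<^sub>R d) /\<^sub>R norm (y - a))) \<longlongrightarrow> 0) (at a within s)"
    unfolding has_vector_derivative_def has_derivative_at_within tendsto_norm_zero_iff
    by (simp add: bounded_linear_scaleR_left)
  also have "\<dots> \<longleftrightarrow> ((\<lambda>y. norm ((1 / (y - a)) *\<^sub>R (F y - F a) - d)) \<longlongrightarrow> 0) (at a within s)"
    by (rule tendsto_cong[OF ev])
  also have "\<dots> \<longleftrightarrow> ((\<lambda>y. (1 / (y - a)) *\<^sub>R (F y - F a)) \<longlongrightarrow> d) (at a within s)" unfolding tendsto_norm_zero_iff LIM_zero_iff ..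
  finally show ?thesis .
qed

lemma vd_right:
  fixes F :: "real \<Rightarrow> 'b::real_normed_vector"
  assumes "(F has_vector_derivative d) (at a within {a..b})" "a < b"
  shows "((\<lambda>h. (1 / h) *\<^sub>R (F (a + h) - F a)) \<longlongrightarrow> d) (at_right 0)"
proof -
  have t: "((\<lambda>y. (1 / (y - a)) *\<^sub>R (F y - F a)) \<longlongrightarrow> d) (at a within {a..b})"
    using assms(1) vd_quot by blast
  have f: "filterlim (\<lambda>h. a + h) (at a within {a..b}) (at_right 0)"
    unfolding filterlim_at
  proof
    show "\<forall>\<^sub>F h in at_right 0. a + h \<in> {a..b} \<and> a + h \<noteq> a"
      by (rule eventually_at_rightI[of 0 "b - a"]) (use assms(2) in auto)
    show "((\<lambda>h. a + h) \<longlongrightarrow> a) (at_right 0)" by (intro tendsto_eq_intros) auto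
  qed
  show ?thesis using filterlim_compose[OF t f] by simp
qed

lemma exp_quot: "((\<lambda>h. (exp h - 1) / h) \<longlongrightarrow> (1::real)) (at_right 0)"
proof -
  have "((\<lambda>y. (exp y - exp 0) / (y - 0)) \<longlongrightarrow> exp (0::real)) (at 0)"
    using DERIV_exp[of 0] unfolding has_field_derivative_iff by simp
  then have "((\<lambda>h. (exp h - 1) / h) \<longlongrightarrow> (1::real)) (at 0)" by simp
  then show ?thesis by (rule filterlim_within_subset) simp
qed

context csg begin

definition "ef x = (\<lambda>s. exp (- s) *\<^sub>R S s x)"

lemma ef_cont: "continuous_on {0..} (ef x)"
  unfolding ef_def by (intro continuous_intros Scont)

definition "efw x = (\<lambda>s. Abw (ef x s))"

lemma efw_cont: "continuous_on {0..} (efw x)"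
  unfolding efw_def by (rule bounded_linear.continuous_on[OF Abw_linear ef_cont])

lemma efw_int: assumes "0 \<le> a" shows "efw x integrable_on {a..b}"
proof (rule integrable_continuous_real)
  show "continuous_on {a..b} (efw x)"
    by (rule continuous_on_subset[OF efw_cont]) (use assms in auto)
qed

definition "Jf x = Rbw (integral {0..1} (efw x))"

lemma Jf_bl: "bounded_linear Jf"
proof (rule bounded_linear_intro[where K=1])
  fix x y
  have "efw (x + y) = (\<lambda>s. efw x s + efw y s)"
    by (auto simp: efw_def ef_def blinfun.add_right scaleR_add_right bw_simps)
  then show "Jf (x + y) = Jf x + Jf y"
    unfolding Jf_def by (simp add: integral_add efw_int bw_simps)
next
  fix r x
  have "efw (r *\<^sub>R x) = (\<lambda>s. r *\<^sub>R efw x s)"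
    by (auto simp: efw_def ef_def blinfun.scaleR_right bw_simps)
  then show "Jf (r *\<^sub>R x) = r *\<^sub>R Jf x" unfolding Jf_def by (simp add: bw_simps)
next
  fix x
  have "norm (integral {0..1} (efw x)) \<le> norm x * Henstock_Kurzweil_Integration.content (cbox 0 (1::real))"
  proof (rule has_integral_bound)
    show "(efw x has_integral integral {0..1} (efw x)) (cbox 0 1)"
      using efw_int[of 0 x 1] by (simp add: has_integral_integral)
    fix s :: real assume "s \<in> cbox 0 1"
    then have s: "0 \<le> s" by auto
    have "norm (efw x s) = exp (- s) * norm (S s x)" by (simp add: efw_def ef_def Abw_norm)
    also have "\<dots> \<le> 1 * norm x"
      using s Snorm_app[OF s, of x] by (intro mult_mono) auto
    finally show "norm (efw x s) \<le> norm x" by simp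
  qed simp
  then show "norm (Jf x) \<le> norm x * 1" by (simp add: Jf_def)
qed

definition "J = Blinfun Jf"
lemma J_apply: "J x = Jf x" unfolding J_def using bounded_linear_Blinfun_apply[OF Jf_bl] by simp

lemma bw_conj_linear: "bounded_linear (\<lambda>z. Abw (L (Rbw z)))"
  for L :: "'a \<Rightarrow>\<^sub>L 'a"
  by (rule bounded_linear_compose[OF Abw_linear bounded_linear_compose[OF blinfun.bounded_linear_right Rbw_linear]])

lemma Jf_linear_gen:
  "L (Jf x) = Rbw (integral {0..1} (\<lambda>s. Abw (L (ef x s))))"
  for L :: "'a \<Rightarrow>\<^sub>L 'a"
proof -
  have "integral {0..1} ((\<lambda>z. Abw (L (Rbw z))) \<circ> efw x) = Abw (L (Rbw (integral {0..1} (efw x))))"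
    using integral_linear[OF efw_int[of 0 x 1] bw_conj_linear[of L]] by simp
  then show ?thesis by (simp add: Jf_def o_def efw_def bw_simps)
qed

lemma J_comm:
  assumes L: "\<And>h. h \<ge> 0 \<Longrightarrow> L o\<^sub>L S h = S h o\<^sub>L L"
  shows "L o\<^sub>L J = J o\<^sub>L L"
proof (rule blinfun_eqI)
  fix x
  have "L (Jf x) = Rbw (integral {0..1} (\<lambda>s. Abw (L (ef x s))))" by (rule Jf_linear_gen)
  also have "\<dots> = Rbw (integral {0..1} (efw (L x)))"
  proof (rule arg_cong[where f=Rbw], rule integral_cong)
    fix s :: real assume "s \<in> {0..1}"
    then have s: "s \<ge> 0" by simp
    show "Abw (L (ef x s)) = efw (L x) s" using L[OF s]
      by (simp add: efw_def ef_def blinfun.scaleR_right) (metis blinfun_apply_blinfun_compose)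
  qed
  finally show "(L o\<^sub>L J) x = (J o\<^sub>L L) x" by (simp add: J_apply Jf_def)
qed

lemma J_key: "Jf x \<in> D" "A (Jf x) = Jf x + exp (- 1) *\<^sub>R S 1 x - x"
proof -
  define f where "f = efw x"
  define F where "F a = integral {0..a} f" for a
  have fc: "continuous_on {0..2} f"
    unfolding f_def by (rule continuous_on_subset[OF efw_cont]) auto
  have dF: "(F has_vector_derivative f a) (at a within {0..2})" if "a \<in> {0..2}" for a
    unfolding F_def by (rule integral_has_vector_derivative[OF fc that])
  have l1: "((\<lambda>h. (1 / h) *\<^sub>R (F (1 + h) - F 1)) \<longlongrightarrow> f 1) (at_right 0)"
    by (rule vd_right[where b=2], rule has_vector_derivative_within_subset[OF dF]) auto
  have l0: "((\<lambda>h. (1 / h) *\<^sub>R (F (0 + h) - F 0)) \<longlongrightarrow> f 0) (at_right 0)"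
    by (rule vd_right[where b=2]) (use dF in auto)
  have F0: "F 0 = 0" by (simp add: F_def)
  have eq: "Abw (S h (Jf x)) = exp h *\<^sub>R (F (1 + h) - F h)" if h: "0 < h" "h < 1" for h
  proof -
    have "S h (Jf x) = Rbw (integral {0..1} (\<lambda>s. Abw (S h (ef x s))))" by (rule Jf_linear_gen)
    also have "integral {0..1} (\<lambda>s. Abw (S h (ef x s))) = integral {0..1} (\<lambda>s. exp h *\<^sub>R f (s + h))"
    proof (rule integral_cong)
      fix s :: real assume "s \<in> {0..1}"
      then have s: "s \<ge> 0" by simp
      have e: "exp (- s) = exp h * exp (- (s + h))" by (simp add: exp_add[symmetric])
      show "Abw (S h (ef x s)) = exp h *\<^sub>R f (s + h)"
        using s h by (simp add: f_def efw_def ef_def blinfun.scaleR_right Sadd_app bw_simps e add.commute)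
    qed
    also have "\<dots> = exp h *\<^sub>R integral {0..1} (\<lambda>s. f (s + h))" by simp
    also have "integral {0..1} (\<lambda>s. f (s + h)) = integral {h..1+h} f"
      using integral_shift_real_ivl[of h h "1 + h" f] by simp
    also have "integral {h..1+h} f = F (1 + h) - F h"
      using Henstock_Kurzweil_Integration.integral_combine[where a=0 and c=h and b="1 + h" and f=f] h efw_int[of 0 x "1 + h"]
      by (simp add: F_def f_def algebra_simps)
    finally show ?thesis by (simp add: bw_simps)
  qed
  define Q where "Q h = exp h *\<^sub>R ((1 / h) *\<^sub>R (F (1 + h) - F 1)) - exp h *\<^sub>R ((1 / h) *\<^sub>R (F (0 + h) - F 0))
      + ((exp h - 1) / h) *\<^sub>R F 1" for h
  have lQ: "(Q \<longlongrightarrow> 1 *\<^sub>R f 1 - 1 *\<^sub>R f 0 + 1 *\<^sub>R F 1) (at_right 0)"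
    unfolding Q_def
    by (intro tendsto_add tendsto_diff tendsto_scaleR l1 l0 exp_quot tendsto_const)
       (auto intro!: tendsto_eq_intros)
  have lR: "((\<lambda>h. Rbw (Q h)) \<longlongrightarrow> Rbw (1 *\<^sub>R f 1 - 1 *\<^sub>R f 0 + 1 *\<^sub>R F 1)) (at_right 0)"
    by (rule bounded_linear.tendsto[OF Rbw_linear lQ])
  have JF: "Jf x = Rbw (F 1)" by (simp add: Jf_def F_def f_def)
  have lim: "Rbw (1 *\<^sub>R f 1 - 1 *\<^sub>R f 0 + 1 *\<^sub>R F 1) = Jf x + exp (- 1) *\<^sub>R S 1 x - x"
    by (simp add: JF f_def efw_def ef_def bw_simps)
  have "((\<lambda>h. q h (Jf x)) \<longlongrightarrow> Jf x + exp (- 1) *\<^sub>R S 1 x - x) (at_right 0)"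
  proof (rule Lim_transform_eventually[OF lR[unfolded lim]])
    show "\<forall>\<^sub>F h in at_right 0. Rbw (Q h) = q h (Jf x)"
    proof (rule eventually_at_rightI[of 0 1])
      fix h :: real assume h: "h \<in> {0<..<1}"
      have e: "Abw (S h (Jf x)) = exp h *\<^sub>R (F (1 + h) - F h)" using h eq by auto
      have "Q h = (1 / h) *\<^sub>R (Abw (S h (Jf x)) - F 1)"
        using h unfolding e Q_def F0
        by (simp add: algebra_simps diff_divide_distrib)
      then show "Rbw (Q h) = q h (Jf x)" by (simp add: bw_simps JF)
    qed simp
  qed
  then show "Jf x \<in> D" "A (Jf x) = Jf x + exp (- 1) *\<^sub>R S 1 x - x" using gen_lim by auto
qed

end

context csg begin

lemma J_A: assumes x: "x \<in> D" shows "Jf (A x) = A (Jf x)"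
proof -
  have t1: "((\<lambda>h. Jf (q h x)) \<longlongrightarrow> Jf (A x)) (at_right 0)"
    by (rule bounded_linear.tendsto[OF Jf_bl gen_tendsto[OF x]])
  have t2: "((\<lambda>h. q h (Jf x)) \<longlongrightarrow> A (Jf x)) (at_right 0)"
    by (rule gen_tendsto[OF J_key(1)])
  have e: "Jf (q h x) = q h (Jf x)" if "h \<ge> 0" for h
  proof -
    have "S h (J x) = J (S h x)"
      using J_comm[of "S h"] Scomm[OF that] by (metis blinfun_apply_blinfun_compose)
    then show ?thesis by (simp add: J_apply[symmetric] blinfun.scaleR_right blinfun.diff_right)
  qed
  have t1': "((\<lambda>h. q h (Jf x)) \<longlongrightarrow> Jf (A x)) (at_right 0)"
  proof (rule Lim_transform_eventually[OF t1])
    show "\<forall>\<^sub>F h in at_right 0. Jf (q h x) = q h (Jf x)"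
      by (rule eventually_at_rightI[of 0 1]) (auto simp: e)
  qed
  show ?thesis using tendsto_unique[OF _ t1' t2] by (simp add: trivial_limit_at_right_real)
qed

definition "K = exp (- 1) *\<^sub>R S 1"

lemma nK: "norm K < 1"
proof -
  have "norm K = exp (- 1) * norm (S 1)" by (simp add: K_def)
  also have "\<dots> \<le> exp (- 1) * 1" using Snorm[of 1] by (intro mult_left_mono) auto
  also have "\<dots> < 1" by simp
  finally show ?thesis .
qed

definition "N = (SOME N. N o\<^sub>L (id_blinfun - K) = id_blinfun \<and> (id_blinfun - K) o\<^sub>L N = id_blinfun
     \<and> norm N \<le> 1 / (1 - norm K) \<and> (\<forall>L. L o\<^sub>L K = K o\<^sub>L L \<longrightarrow> L o\<^sub>L N = N o\<^sub>L L))"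

lemma N_props: "N o\<^sub>L (id_blinfun - K) = id_blinfun" "(id_blinfun - K) o\<^sub>L N = id_blinfun"
    "\<And>L. L o\<^sub>L K = K o\<^sub>L L \<Longrightarrow> L o\<^sub>L N = N o\<^sub>L L"
  using someI_ex[OF neumann_gen[OF nK]] unfolding N_def[symmetric] by blast+

lemma N_app1: "N (y - K y) = y"
  using arg_cong[OF N_props(1), of "\<lambda>M. blinfun_apply M y"] by (simp add: blinfun.diff_left)
lemma N_app2: "N y - K (N y) = y"
  using arg_cong[OF N_props(2), of "\<lambda>M. blinfun_apply M y"] by (simp add: blinfun.diff_left)

lemma K_comm: assumes L: "\<And>h. h \<ge> 0 \<Longrightarrow> L o\<^sub>L S h = S h o\<^sub>L L" shows "L o\<^sub>L K = K o\<^sub>L L"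
proof (rule blinfun_eqI)
  fix y
  have "L (S 1 y) = S 1 (L y)" using comm_app[OF L[of 1]] by simp
  then show "(L o\<^sub>L K) y = (K o\<^sub>L L) y" by (simp add: K_def blinfun.scaleR_left blinfun.scaleR_right)
qed

definition "R = J o\<^sub>L N"

lemma J_N: "J (N y) = N (J y)"
proof -
  have "J o\<^sub>L S h = S h o\<^sub>L J" if "h \<ge> 0" for h
    using J_comm[of "S h"] Scomm that by metis
  then have "J o\<^sub>L K = K o\<^sub>L J" by (rule K_comm)
  then have "J o\<^sub>L N = N o\<^sub>L J" by (rule N_props(3))
  then show ?thesis by (metis blinfun_apply_blinfun_compose)
qed

lemma R_D: "R y \<in> D" using J_key(1) by (simp add: R_def J_apply)

lemma R_A: "A (R y) = R y - y"
proof -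
  have "A (R y) = Jf (N y) + exp (- 1) *\<^sub>R S 1 (N y) - N y"
    using J_key(2) by (simp add: R_def J_apply)
  also have "\<dots> = R y - (N y - K (N y))" by (simp add: R_def J_apply K_def blinfun.scaleR_left)
  finally show ?thesis by (simp add: N_app2)
qed

lemma R_inv: assumes x: "x \<in> D" shows "R (x - A x) = x"
proof -
  have "R (x - A x) = N (Jf x - Jf (A x))"
    by (simp add: R_def J_N J_apply[symmetric] blinfun.diff_right)
  also have "\<dots> = N (x - K x)" by (simp add: J_A[OF x] J_key(2) K_def blinfun.scaleR_left)
  finally show ?thesis by (simp add: N_app1)
qed

lemma R_comm:
  assumes L: "\<And>h. h \<ge> 0 \<Longrightarrow> L o\<^sub>L S h = S h o\<^sub>L L"
  shows "L o\<^sub>L R = R o\<^sub>L L"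
proof -
  have 1: "L o\<^sub>L J = J o\<^sub>L L" by (rule J_comm[OF L])
  have 2: "L o\<^sub>L N = N o\<^sub>L L" by (rule N_props(3)[OF K_comm[OF L]])
  show ?thesis
  proof (rule blinfun_eqI)
    fix x
    show "(L o\<^sub>L R) x = (R o\<^sub>L L) x"
      by (simp add: R_def comm_app[OF 1] comm_app[OF 2])
  qed
qed

lemma R_inj: assumes "R u = R v" shows "u = v"
proof -
  have "u = R u - A (R u)" by (simp add: R_A)
  also have "\<dots> = R v - A (R v)" using assms by simp
  also have "\<dots> = v" by (simp add: R_A)
  finally show ?thesis .
qed

lemma cogen: "cogenerator S = id_blinfun - 2 *\<^sub>R R"
  unfolding cogenerator_def
proof (rule the_equality)
  show "\<forall>x\<in>D. (id_blinfun - 2 *\<^sub>R R) (A x - x) = A x + x"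
  proof
    fix x assume x: "x \<in> D"
    have "R (A x - x) = - x" using R_inv[OF x]
      by (metis blinfun.minus_right minus_diff_eq)
    then show "(id_blinfun - 2 *\<^sub>R R) (A x - x) = A x + x"
      by (simp add: blinfun.diff_left blinfun.scaleR_left scaleR_2 blinfun.add_left)
  qed
next
  fix V :: "'a \<Rightarrow>\<^sub>L 'a" assume V: "\<forall>x\<in>D. V (A x - x) = A x + x"
  show "V = id_blinfun - 2 *\<^sub>R R"
  proof (rule blinfun_eqI)
    fix z
    have Rm: "R (- z) = - R z" by (rule blinfun.minus_right)
    have a: "A (- R z) = - R z + z" using R_A[of "- z"] Rm by simp
    have D: "- R z \<in> D" using R_D[of "- z"] Rm by simp
    have "V (A (- R z) - (- R z)) = A (- R z) + (- R z)" using V D by blast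
    then have "V z = z - 2 *\<^sub>R R z" using a by (simp add: scaleR_2)
    then show "V z = (id_blinfun - 2 *\<^sub>R R) z"
      by (simp add: blinfun.diff_left blinfun.scaleR_left)
  qed
qed

end

lemma filterlim_uminus_at0: "filterlim (\<lambda>h::real. - h) (at 0) (at 0)"
  unfolding filterlim_at
proof
  show "\<forall>\<^sub>F h in at 0. - h \<in> UNIV \<and> - h \<noteq> (0::real)"
    unfolding eventually_at_filter by (rule always_eventually) simp
  show "((\<lambda>h::real. - h) \<longlongrightarrow> 0) (at 0)" by (intro tendsto_eq_intros) auto
qed

context csg begin

lemma B_D:
  assumes BR: "B o\<^sub>L R = R o\<^sub>L B" and z: "z \<in> D"
  shows "B z \<in> D" "A (B z) = B (A z)"
proof -
  have BR': "B (R y) = R (B y)" for y using BR by (metis blinfun_apply_blinfun_compose)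
  have e: "B z = R (B (z - A z))" using R_inv[OF z] BR' by metis
  show "B z \<in> D" unfolding e by (rule R_D)
  show "A (B z) = B (A z)" unfolding e R_A using e[symmetric] by (simp add: blinfun.diff_right)
qed

lemma comm_D:
  assumes BR: "B o\<^sub>L R = R o\<^sub>L B" and x: "x \<in> D" and t: "t > 0"
  shows "B (S t x) = S t (B x)"
proof -
  define g where "g r = B (S r x)" for r
  define w where "w r = S (t - r) (g r)" for r
  have cont: "continuous_on {0..t} w"
    unfolding continuous_on_def
  proof
    fix r assume r: "r \<in> {0..t}"
    have ev: "\<forall>\<^sub>F r' in at r within {0..t}. 0 \<le> t - r'"
      unfolding eventually_at_filter by (rule always_eventually) auto
    have gt: "(g \<longlongrightarrow> g r) (at r within {0..t})"
      unfolding g_def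
      by (rule blinfun.tendsto[OF tendsto_const], rule filterlim_within_subset[OF Stendsto]) (use r in auto)
    show "(w \<longlongrightarrow> w r) (at r within {0..t})"
      unfolding w_def
      by (rule apply_tendsto[OF _ _ ev gt]) (use r in \<open>auto intro!: tendsto_eq_intros\<close>)
  qed
  define wb where "wb r = Abw (w r)" for r
  have der: "(wb has_derivative (\<lambda>h. 0)) (at r within {0..t})" if r: "r \<in> {0..t} - {0, t}" for r
  proof -
    from r have r0: "0 < r" and rt: "r < t" by auto
    define y where "y = g r"
    have yD: "y \<in> D" unfolding y_def g_def by (rule B_D(1)[OF BR conjunct1[OF gen_inv[OF x]]]) (use r0 in auto)
    have Ay: "A y = B (S r (A x))"
      unfolding y_def g_def using B_D(2)[OF BR conjunct1[OF gen_inv[OF x]]] gen_inv[OF x] r0 by auto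
    have T1: "((\<lambda>h. S (t - (r + h)) ((1 / h) *\<^sub>R (g (r + h) - g r))) \<longlongrightarrow> S (t - r) (B (S r (A x)))) (at 0)"
    proof (rule apply_tendsto)
      show "((\<lambda>h. t - (r + h)) \<longlongrightarrow> t - r) (at 0)" by (intro tendsto_eq_intros) auto
      show "\<forall>\<^sub>F h in at 0. 0 \<le> t - (r + h)"
        using order_tendstoD(1)[OF \<open>((\<lambda>h. t - (r + h)) \<longlongrightarrow> t - r) (at 0)\<close>, of 0] rt
        by (auto elim: eventually_mono)
      have "((\<lambda>h. B ((1 / h) *\<^sub>R (S (r + h) x - S r x))) \<longlongrightarrow> B (S r (A x))) (at 0)"
        by (rule blinfun.tendsto[OF tendsto_const Sderiv[OF x r0]])
      then show "((\<lambda>h. (1 / h) *\<^sub>R (g (r + h) - g r)) \<longlongrightarrow> B (S r (A x))) (at 0)"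
        by (simp add: g_def blinfun.scaleR_right blinfun.diff_right)
    qed (use rt in auto)
    have T2: "((\<lambda>h. - ((1 / (- h)) *\<^sub>R (S ((t - r) + - h) y - S (t - r) y))) \<longlongrightarrow> - S (t - r) (A y)) (at 0)"
      by (rule tendsto_minus, rule filterlim_compose[OF Sderiv[OF yD] filterlim_uminus_at0]) (use rt in auto)
    have sum: "((\<lambda>h. S (t - (r + h)) ((1 / h) *\<^sub>R (g (r + h) - g r)) +
        - ((1 / (- h)) *\<^sub>R (S ((t - r) + - h) y - S (t - r) y))) \<longlongrightarrow> 0) (at 0)"
      using tendsto_add[OF T1 T2] by (simp add: Ay)
    have eq: "S (t - (r + h)) ((1 / h) *\<^sub>R (g (r + h) - g r)) +
        - ((1 / (- h)) *\<^sub>R (S ((t - r) + - h) y - S (t - r) y)) = (1 / (r + h - r)) *\<^sub>R (w (r + h) - w r)" for h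
    proof -
      have e: "t - r + - h = t - (r + h)" by simp
      show ?thesis unfolding e w_def y_def
        by (simp add: blinfun.scaleR_right blinfun.diff_right algebra_simps)
    qed
    have "((\<lambda>h. (1 / (r + h - r)) *\<^sub>R (w (r + h) - w r)) \<longlongrightarrow> 0) (at 0)"
      using sum unfolding eq .
    then have "((\<lambda>y. (1 / (y - r)) *\<^sub>R (w y - w r)) \<longlongrightarrow> 0) (at r)"
      by (subst LIM_offset_zero_iff) auto
    then have "((\<lambda>y. Abw ((1 / (y - r)) *\<^sub>R (w y - w r))) \<longlongrightarrow> Abw 0) (at r)"
      by (rule bounded_linear.tendsto[OF Abw_linear])
    then have "((\<lambda>y. (1 / (y - r)) *\<^sub>R (wb y - wb r)) \<longlongrightarrow> 0) (at r)"
      by (simp add: wb_def bw_simps)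
    then have "(wb has_vector_derivative 0) (at r)" using vd_quot by blast
    then have "(wb has_vector_derivative 0) (at r within {0..t})" by (rule has_vector_derivative_at_within)
    then show ?thesis by (simp add: has_vector_derivative_def)
  qed
  have contb: "continuous_on {0..t} wb"
    unfolding wb_def by (rule bounded_linear.continuous_on[OF Abw_linear cont])
  have "wb t = wb 0"
    by (rule has_derivative_zero_unique_strong_interval[of "{0, t}" 0 t wb "wb 0" t])
       (use contb der t in auto)
  then have "w t = w 0" unfolding wb_def by (metis Abw_inverse UNIV_I)
  then show ?thesis by (simp add: w_def g_def)
qed

lemma comm_S:
  assumes BR: "B o\<^sub>L R = R o\<^sub>L B" and t: "t \<ge> 0"
  shows "B o\<^sub>L S t = S t o\<^sub>L B"
proof (cases "t = 0")
  case True then show ?thesis by simp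
next
  case False
  with t have t: "t > 0" by simp
  have BR': "B (R y) = R (B y)" for y using BR by (metis blinfun_apply_blinfun_compose)
  have SR: "S t (R y) = R (S t y)" for y
    using R_comm[of "S t"] Scomm t by (metis blinfun_apply_blinfun_compose less_imp_le)
  show ?thesis
  proof (rule blinfun_eqI)
    fix x
    have "R (B (S t x)) = R (S t (B x))"
      using comm_D[OF BR R_D t, of x] by (simp add: BR' SR)
    then show "(B o\<^sub>L S t) x = (S t o\<^sub>L B) x" using R_inj by simp
  qed
qed

end

lemma prod_lim:
  fixes P :: "'b \<Rightarrow> ('a::real_normed_vector \<Rightarrow>\<^sub>L 'a)"
  assumes n: "eventually (\<lambda>t. norm (P t) \<le> 1) F" and p: "\<And>v. ((\<lambda>t. P t v) \<longlongrightarrow> P0 v) F"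
    and u: "(u \<longlongrightarrow> u0) F"
  shows "((\<lambda>t. P t (u t)) \<longlongrightarrow> P0 u0) F"
proof -
  have nz: "((\<lambda>h. norm (u h - u0)) \<longlongrightarrow> 0) F"
    using u by (intro tendsto_norm_zero) (simp add: LIM_zero)
  have 1: "((\<lambda>h. P h (u h - u0)) \<longlongrightarrow> 0) F"
  proof (rule Lim_null_comparison[OF _ nz])
    show "\<forall>\<^sub>F x in F. norm (P x (u x - u0)) \<le> norm (u x - u0)"
      using n
    proof (rule eventually_mono)
      fix x assume "norm (P x) \<le> 1"
      then show "norm (P x (u x - u0)) \<le> norm (u x - u0)"
        using norm_blinfun[of "P x" "u x - u0"] mult_right_mono[of "norm (P x)" 1 "norm (u x - u0)"] by simp
    qed
  qed
  have "((\<lambda>h. P h (u h - u0) + P h u0) \<longlongrightarrow> 0 + P0 u0) F"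
    by (intro tendsto_add 1 p)
  then show ?thesis by (simp add: blinfun.diff_right)
qed

context csg begin

definition "Kt t = (1 / (1 + t)) *\<^sub>R S t"

lemma nKt: assumes t: "t > 0" shows "norm (Kt t) \<le> 1 / (1 + t)" "norm (Kt t) < 1"
proof -
  have "norm (Kt t) = 1 / (1 + t) * norm (S t)" using t by (simp add: Kt_def)
  also have "\<dots> \<le> 1 / (1 + t) * 1" using Snorm[of t] t by (intro mult_left_mono) auto
  finally show "norm (Kt t) \<le> 1 / (1 + t)" by simp
  also have "\<dots> < 1" using t by simp
  finally show "norm (Kt t) < 1" .
qed

definition "Nt t = (SOME N. N o\<^sub>L (id_blinfun - Kt t) = id_blinfun \<and> (id_blinfun - Kt t) o\<^sub>L N = id_blinfun
     \<and> norm N \<le> 1 / (1 - norm (Kt t)) \<and> (\<forall>L. L o\<^sub>L Kt t = Kt t o\<^sub>L L \<longrightarrow> L o\<^sub>L N = N o\<^sub>L L))"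

lemma Nt_props: assumes t: "t > 0"
  shows "Nt t o\<^sub>L (id_blinfun - Kt t) = id_blinfun"
    "norm (Nt t) \<le> 1 / (1 - norm (Kt t))"
    "\<And>L. L o\<^sub>L Kt t = Kt t o\<^sub>L L \<Longrightarrow> L o\<^sub>L Nt t = Nt t o\<^sub>L L"
  using someI_ex[OF neumann_gen[OF nKt(2)[OF t]]] unfolding Nt_def[symmetric] by blast+

definition "Rt t = (t / (1 + t)) *\<^sub>R Nt t"

lemma Rt_norm: assumes t: "t > 0" shows "norm (Rt t) \<le> 1"
proof -
  have k: "norm (Kt t) \<le> 1 / (1 + t)" "norm (Kt t) < 1" using nKt[OF t] by auto
  have "1 / (1 - norm (Kt t)) \<le> 1 / (1 - 1 / (1 + t))"
    using k t by (intro divide_left_mono mult_pos_pos) (auto simp: field_simps)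
  also have "\<dots> = (1 + t) / t" using t by (simp add: field_simps)
  finally have "norm (Nt t) \<le> (1 + t) / t" using Nt_props(2)[OF t] by linarith
  then have "t / (1 + t) * norm (Nt t) \<le> t / (1 + t) * ((1 + t) / t)"
    using t by (intro mult_left_mono) auto
  also have "\<dots> = 1" using t by simp
  finally show ?thesis using t by (simp add: Rt_def)
qed

lemma Rt_eq: assumes t: "t > 0" shows "Rt t (y - q t y) = y"
proof -
  have N1: "Nt t (z - Kt t z) = z" for z
    using arg_cong[OF Nt_props(1)[OF t], of "\<lambda>M. blinfun_apply M z"] by (simp add: blinfun.diff_left)
  have c1: "(1 + t) / t = 1 + 1 / t" using t by (simp add: field_simps)
  have c2: "(1 + t) / t * (1 / (1 + t)) = 1 / t" using t by (simp add: field_simps)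
  have "((1 + t) / t) *\<^sub>R (y - Kt t y) = ((1 + t) / t) *\<^sub>R y - ((1 + t) / t) *\<^sub>R ((1 / (1 + t)) *\<^sub>R S t y)"
    by (simp add: Kt_def blinfun.scaleR_left scaleR_diff_right)
  also have "\<dots> = (1 + 1 / t) *\<^sub>R y - (1 / t) *\<^sub>R S t y" by (simp only: scaleR_scaleR c2, simp only: c1)
  also have "\<dots> = y - q t y" by (simp add: algebra_simps)
  finally have "y - q t y = ((1 + t) / t) *\<^sub>R (y - Kt t y)" by simp
  then have "Rt t (y - q t y) = ((1 + t) / t) *\<^sub>R (t / (1 + t)) *\<^sub>R Nt t (y - Kt t y)"
    by (simp only: Rt_def blinfun.scaleR_left blinfun.scaleR_right)
  also have "\<dots> = y"
  proof -
    have c3: "(1 + t) / t * (t / (1 + t)) = 1" using t by (simp add: divide_simps)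
    show ?thesis by (simp only: scaleR_scaleR c3 scaleR_one N1)
  qed
  finally show ?thesis .
qed

lemma Rt_comm: assumes t: "t > 0" and L: "L o\<^sub>L S t = S t o\<^sub>L L" shows "L o\<^sub>L Rt t = Rt t o\<^sub>L L"
proof -
  have "L o\<^sub>L Kt t = Kt t o\<^sub>L L"
  proof (rule blinfun_eqI)
    fix y
    have "L (S t y) = S t (L y)" using comm_app[OF L] by simp
    then show "(L o\<^sub>L Kt t) y = (Kt t o\<^sub>L L) y" by (simp add: Kt_def blinfun.scaleR_left blinfun.scaleR_right)
  qed
  then have "L o\<^sub>L Nt t = Nt t o\<^sub>L L" by (rule Nt_props(3)[OF t])
  then have "L (Nt t y) = Nt t (L y)" for y using comm_app by blast
  then show ?thesis
    by (intro blinfun_eqI) (simp add: Rt_def blinfun.scaleR_left blinfun.scaleR_right)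
qed

lemma Rt_lim: "((\<lambda>t. Rt t y) \<longlongrightarrow> R y) (at_right 0)"
proof -
  define x where "x = R y"
  have xD: "x \<in> D" unfolding x_def by (rule R_D)
  have y: "y = x - A x" unfolding x_def using R_A[of y] by simp
  have e: "Rt t y - x = Rt t (q t x - A x)" if t: "t > 0" for t
  proof -
    have "Rt t y - x = Rt t y - Rt t (x - q t x)" using Rt_eq[OF t] by simp
    also have "\<dots> = Rt t (q t x - A x)" by (simp add: y blinfun.diff_right[symmetric])
    finally show ?thesis .
  qed
  have nz: "((\<lambda>t. norm (q t x - A x)) \<longlongrightarrow> 0) (at_right 0)"
    using gen_tendsto[OF xD] by (intro tendsto_norm_zero) (simp add: LIM_zero)
  have "((\<lambda>t. Rt t y - x) \<longlongrightarrow> 0) (at_right 0)"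
  proof (rule Lim_null_comparison[OF _ nz])
    show "\<forall>\<^sub>F t in at_right 0. norm (Rt t y - x) \<le> norm (q t x - A x)"
    proof (rule eventually_at_rightI[of 0 1])
      fix t :: real assume t: "t \<in> {0<..<1}"
      then have "norm (Rt t (q t x - A x)) \<le> norm (Rt t) * norm (q t x - A x)" by (intro norm_blinfun)
      also have "\<dots> \<le> 1 * norm (q t x - A x)" using Rt_norm t by (intro mult_right_mono) auto
      finally show "norm (Rt t y - x) \<le> norm (q t x - A x)" using e t by simp
    qed simp
  qed
  then show ?thesis by (simp add: LIM_zero_iff x_def)
qed

end

theorem main_aux:
  fixes S1 S2 :: "real \<Rightarrow> ('a::{real_inner,complete_space} \<Rightarrow>\<^sub>L 'a)"
    and T1 T2 :: "'a \<Rightarrow>\<^sub>L 'a"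
  assumes "contraction_C0_semigroup S1" and "contraction_C0_semigroup S2"
    and "T1 = cogenerator S1" and "T2 = cogenerator S2"
  shows "((\<forall>t\<ge>0. S1 t o\<^sub>L S2 t = S2 t o\<^sub>L S1 t) \<longleftrightarrow> T1 o\<^sub>L T2 = T2 o\<^sub>L T1)
       \<and> (T1 o\<^sub>L T2 = T2 o\<^sub>L T1 \<longleftrightarrow> (\<forall>t\<ge>0. \<forall>s\<ge>0. S1 t o\<^sub>L S2 s = S2 s o\<^sub>L S1 t))"
proof -
  interpret c1: csg S1 by unfold_locales (rule assms(1))
  interpret c2: csg S2 by unfold_locales (rule assms(2))
  have T1: "T1 = id_blinfun - 2 *\<^sub>R c1.R" using assms(3) c1.cogen by simp
  have T2: "T2 = id_blinfun - 2 *\<^sub>R c2.R" using assms(4) c2.cogen by simp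
  have TR: "T1 o\<^sub>L T2 = T2 o\<^sub>L T1 \<longleftrightarrow> c1.R o\<^sub>L c2.R = c2.R o\<^sub>L c1.R"
  proof
    assume h: "T1 o\<^sub>L T2 = T2 o\<^sub>L T1"
    show "c1.R o\<^sub>L c2.R = c2.R o\<^sub>L c1.R"
    proof (rule blinfun_eqI)
      fix x
      have "(T1 o\<^sub>L T2) x = (T2 o\<^sub>L T1) x" using h by simp
      then have "4 *\<^sub>R c1.R (c2.R x) = 4 *\<^sub>R c2.R (c1.R x)"
        by (simp add: T1 T2 blinfun.diff_left blinfun.diff_right blinfun.scaleR_left blinfun.scaleR_right algebra_simps)
      then show "(c1.R o\<^sub>L c2.R) x = (c2.R o\<^sub>L c1.R) x" by simp
    qed
  next
    assume h: "c1.R o\<^sub>L c2.R = c2.R o\<^sub>L c1.R"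
    show "T1 o\<^sub>L T2 = T2 o\<^sub>L T1"
    proof (rule blinfun_eqI)
      fix x
      have "c1.R (c2.R x) = c2.R (c1.R x)" using h by (metis blinfun_apply_blinfun_compose)
      then show "(T1 o\<^sub>L T2) x = (T2 o\<^sub>L T1) x"
        by (simp add: T1 T2 blinfun.diff_left blinfun.diff_right blinfun.scaleR_left blinfun.scaleR_right algebra_simps)
    qed
  qed
  have P1P2: "c1.R o\<^sub>L c2.R = c2.R o\<^sub>L c1.R" if P1: "\<forall>t\<ge>0. S1 t o\<^sub>L S2 t = S2 t o\<^sub>L S1 t"
  proof (rule blinfun_eqI)
    fix y
    have cm: "c1.Rt t (c2.Rt t y) = c2.Rt t (c1.Rt t y)" if t: "t > 0" for t
    proof -
      have "S1 t o\<^sub>L S2 t = S2 t o\<^sub>L S1 t" using P1 t by simp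
      then have a: "S1 t o\<^sub>L c2.Rt t = c2.Rt t o\<^sub>L S1 t" by (rule c2.Rt_comm[OF t])
      have "c2.Rt t o\<^sub>L c1.Rt t = c1.Rt t o\<^sub>L c2.Rt t" by (rule c1.Rt_comm[OF t a[symmetric]])
      then show ?thesis by (metis blinfun_apply_blinfun_compose)
    qed
    have ev: "\<forall>\<^sub>F t in at_right 0. t > (0::real)" by (rule eventually_at_right_less)
    have l1: "((\<lambda>t. c1.Rt t (c2.Rt t y)) \<longlongrightarrow> c1.R (c2.R y)) (at_right 0)"
      by (rule prod_lim[OF _ c1.Rt_lim c2.Rt_lim]) (use ev in \<open>auto elim!: eventually_mono intro: c1.Rt_norm\<close>)
    have l2: "((\<lambda>t. c2.Rt t (c1.Rt t y)) \<longlongrightarrow> c2.R (c1.R y)) (at_right 0)"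
      by (rule prod_lim[OF _ c2.Rt_lim c1.Rt_lim]) (use ev in \<open>auto elim!: eventually_mono intro: c2.Rt_norm\<close>)
    have l1': "((\<lambda>t. c2.Rt t (c1.Rt t y)) \<longlongrightarrow> c1.R (c2.R y)) (at_right 0)"
    proof (rule Lim_transform_eventually[OF l1])
      show "\<forall>\<^sub>F t in at_right 0. c1.Rt t (c2.Rt t y) = c2.Rt t (c1.Rt t y)"
        using ev by (auto elim!: eventually_mono intro: cm)
    qed
    show "(c1.R o\<^sub>L c2.R) y = (c2.R o\<^sub>L c1.R) y"
      using tendsto_unique[OF _ l1' l2] by (simp add: trivial_limit_at_right_real)
  qed
  have P2P3: "S1 t o\<^sub>L S2 s = S2 s o\<^sub>L S1 t"
    if P2: "c1.R o\<^sub>L c2.R = c2.R o\<^sub>L c1.R" and t: "t \<ge> 0" and s: "s \<ge> 0" for t s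
  proof -
    have "c2.R o\<^sub>L S1 t = S1 t o\<^sub>L c2.R" by (rule c1.comm_S[OF P2[symmetric] t])
    then show ?thesis using c2.comm_S[OF _ s, of "S1 t"] by simp
  qed
  show ?thesis using TR P1P2 P2P3 by blast
qed


theorem mainTheorem5:
  fixes S1 S2 :: "real \<Rightarrow> ('a::{real_inner,complete_space} \<Rightarrow>\<^sub>L 'a)"
    and T1 T2 :: "'a \<Rightarrow>\<^sub>L 'a"
  assumes "contraction_C0_semigroup S1" and "contraction_C0_semigroup S2"
    and "T1 = cogenerator S1" and "T2 = cogenerator S2"
  shows "((\<forall>t\<ge>0. S1 t o\<^sub>L S2 t = S2 t o\<^sub>L S1 t) \<longleftrightarrow> T1 o\<^sub>L T2 = T2 o\<^sub>L T1)
       \<and> (T1 o\<^sub>L T2 = T2 o\<^sub>L T1 \<longleftrightarrow> (\<forall>t\<ge>0. \<forall>s\<ge>0. S1 t o\<^sub>L S2 s = S2 s o\<^sub>L S1 t))"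
    using main_aux[OF assms] .

end
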